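(* Let $(P,\preceq)$ be a poset, $\mathcal{X}:=\{X\subseteq P\mid (X,\preceq)\text{ well-ordered}\}$, and $\Lambda$ a set. The $\Lambda$-system algebra of causal systems over $\mathcal{X}$ is a composition-order invariant functional $\Lambda$-system algebra over $\mathcal{X}$; in particular its set of systems is closed under parallel composition and interface connection.
   Context: $\mathcal{X}^{\mathcal{I}}$ is the set of functions $\mathcal{I}\to\mathcal{X}$; $\mathbin{\triangle}$ is symmetric difference; $x\prec y$ means $x\preceq y$, $x\ne y$. For finite disjoint $\mathcal{I},\mathcal{O}\subseteq\Lambda$, a causal $(\mathcal{I},\mathcal{O})$-system over $\mathcal{X}$ is a function $s:\mathcal{X}^{\mathcal{I}}\to\mathcal{X}^{\mathcal{O}}$ such that for all $\mathbf{X},\mathbf{X}'$, $o\in\mathcal{O}$, $y\in s(\mathbf{X})(o)\mathbin{\triangle}s(\mathbf{X}')(o)$ there exist $i\in\mathcal{I}$, $x\in\mathbf{X}(i)\mathbin{\triangle}\mathbf{X}'(i)$ with $x\prec y$. The $\Lambda$-system algebra of causal systems has as systems all causal $(\mathcal{I},\mathcal{O})$-systems for finite disjoint $\mathcal{I},\mathcal{O}\subseteq\Lambda$, with $\lambda(s)=\mathcal{I}\cup\mathcal{O}$, $\Gamma(s)=\{\{i,o\}\mid i\in\mathcal{I},o\in\mathcal{O}\}$, parallel composition $(s_1\parallel s_2)(\mathbf{X})(o_j)=s_j(\mathbf{X}|_{\mathcal{I}_j})(o_j)$ for $s_j$ with index sets $\mathcal{I}_j,\mathcal{O}_j$ ($j=1,2$,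 all four pairwise disjoint), and interface connection $\gamma_{i,o}(s)(\mathbf{X})=s(\mathbf{X}\cup\{(i,X^* )\})|_{\mathcal{O}\setminus\{o\}}$ for $\mathbf{X}\in\mathcal{X}^{\mathcal{I}\setminus\{i\}}$, where $X^*$ is the unique $X_i\in\mathcal{X}$ with $s(\mathbf{X}\cup\{(i,X_i)\})(o)=X_i$. Being a functional $\Lambda$-system algebra means that the set of systems is closed under $\parallel$ and $\gamma$ and $\{i,o\}\in\Gamma(s_1\parallel s_2)\iff\{i,o\}\in\Gamma(s_j)$ for $i,o\in\lambda(s_j)$ when $\lambda(s_1)\cap\lambda(s_2)=\emptyset$. Composition-order invariance means: (i) for all $s$, $\{i,o\}\in\Gamma(s)$, $\{i',o'\}\in\Gamma(\gamma_{i,o}(s))$: $\{i',o'\}\in\Gamma(s)$, $\{i,o\}\in\Gamma(\gamma_{i',o'}(s))$, and $\gamma_{i',o'}(\gamma_{i,o}(s))=\gamma_{i,o}(\gamma_{i',o'}(s))$; (ii) $\parallel$ is associative and commutative; (iii) $\gamma_{i,o}(s_1)\parallel s_2=\gamma_{i,o}(s_1\parallel s_2)$ whenever $\lambda(s_1)\cap\lambda(s_2)=\emptyset$ and $\{i,o\}\in\Gamma(s_1)$. *)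

theory Defs
  imports "HOL-Library.FuncSet"
begin

text \<open>The poset (P, \<preceq>) is a type of class order; \<open>\<prec>\<close> is \<open><\<close>.
  The value set is the set of all well-ordered subsets of P.\<close>

definition well_ordered_subset :: "'p::order set \<Rightarrow> bool" where
  "well_ordered_subset X \<longleftrightarrow>
     (\<forall>x\<in>X. \<forall>y\<in>X. x \<le> y \<or> y \<le> x) \<and>
     (\<forall>A. A \<subseteq> X \<longrightarrow> A \<noteq> {} \<longrightarrow> (\<exists>a\<in>A. \<forall>b\<in>A. a \<le> b))"

definition WO :: "'p::order set set" where
  "WO = {X. well_ordered_subset X}"

definition symdiff :: "'a set \<Rightarrow> 'a set \<Rightarrow> 'a set" where
  "symdiff A B = (A - B) \<union> (B - A)"

text \<open>A system is a triple (I, O, s) with s a function X^I \<rightarrow> X^O; elements of X^I are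
  represented as extensional functions on I (PiE), and s itself is extensional
  on X^I, so that equality of systems is equality of the mathematical functions.
  The label set \<Lambda> is the type 'l.\<close>

type_synonym ('l, 'p) sys = "'l set \<times> 'l set \<times> (('l \<Rightarrow> 'p set) \<Rightarrow> ('l \<Rightarrow> 'p set))"

definition Ins :: "('l, 'p) sys \<Rightarrow> 'l set" where "Ins s = fst s"
definition Outs :: "('l, 'p) sys \<Rightarrow> 'l set" where "Outs s = fst (snd s)"
definition fn :: "('l, 'p) sys \<Rightarrow> ('l \<Rightarrow> 'p set) \<Rightarrow> ('l \<Rightarrow> 'p set)" where "fn s = snd (snd s)"

abbreviation Inputs :: "'l set \<Rightarrow> ('l \<Rightarrow> 'p::order set) set" where
  "Inputs I \<equiv> PiE I (\<lambda>_. WO)"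

definition causal_system :: "('l, 'p::order) sys \<Rightarrow> bool" where
  "causal_system s \<longleftrightarrow>
     finite (Ins s) \<and> finite (Outs s) \<and> Ins s \<inter> Outs s = {} \<and>
     fn s \<in> extensional_funcset (Inputs (Ins s)) (Inputs (Outs s)) \<and>
     (\<forall>X\<in>Inputs (Ins s). \<forall>X'\<in>Inputs (Ins s). \<forall>ou\<in>Outs s.
        \<forall>y\<in>symdiff (fn s X ou) (fn s X' ou).
          \<exists>i\<in>Ins s. \<exists>x\<in>symdiff (X i) (X' i). x < y)"

definition causal_systems :: "('l, 'p::order) sys set" where
  "causal_systems = {s. causal_system s}"

definition lam :: "('l, 'p) sys \<Rightarrow> 'l set" where
  "lam s = Ins s \<union> Outs s"

definition Gam :: "('l, 'p) sys \<Rightarrow> 'l set set" where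
  "Gam s = {{i, ou} | i ou. i \<in> Ins s \<and> ou \<in> Outs s}"

definition par :: "('l, 'p::order) sys \<Rightarrow> ('l, 'p) sys \<Rightarrow> ('l, 'p) sys" where
  "par s1 s2 =
     (Ins s1 \<union> Ins s2, Outs s1 \<union> Outs s2,
      \<lambda>X. if X \<in> Inputs (Ins s1 \<union> Ins s2) then
             (\<lambda>l. if l \<in> Outs s1 then fn s1 (restrict X (Ins s1)) l
                  else if l \<in> Outs s2 then fn s2 (restrict X (Ins s2)) l
                  else undefined)
           else undefined)"

definition fixval :: "('l, 'p::order) sys \<Rightarrow> 'l \<Rightarrow> 'l \<Rightarrow> ('l \<Rightarrow> 'p set) \<Rightarrow> 'p set" where
  "fixval s i ou X = (THE Xi. Xi \<in> WO \<and> fn s (X(i := Xi)) ou = Xi)"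

definition gamma :: "('l, 'p::order) sys \<Rightarrow> 'l \<Rightarrow> 'l \<Rightarrow> ('l, 'p) sys" where
  "gamma s i ou =
     (Ins s - {i}, Outs s - {ou},
      \<lambda>X. if X \<in> Inputs (Ins s - {i}) then
             restrict (fn s (X(i := fixval s i ou X))) (Outs s - {ou})
           else undefined)"

definition conn :: "('l, 'p::order) sys \<Rightarrow> 'l set \<Rightarrow> ('l, 'p) sys" where
  "conn s e = gamma s (THE i. i \<in> e \<and> i \<in> Ins s) (THE ou. ou \<in> e \<and> ou \<in> Outs s)"

definition connection_well_defined :: "('l, 'p::order) sys set \<Rightarrow> bool" where
  "connection_well_defined S \<longleftrightarrow>
     (\<forall>s\<in>S. \<forall>i\<in>Ins s. \<forall>ou\<in>Outs s. \<forall>X\<in>Inputs (Ins s - {i}).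
        \<exists>!Xi. Xi \<in> WO \<and> fn s (X(i := Xi)) ou = Xi)"

definition functional_system_algebra ::
  "'s set \<Rightarrow> ('s \<Rightarrow> 'l set) \<Rightarrow> ('s \<Rightarrow> 'l set set) \<Rightarrow> ('s \<Rightarrow> 's \<Rightarrow> 's) \<Rightarrow> ('s \<Rightarrow> 'l set \<Rightarrow> 's) \<Rightarrow> bool" where
  "functional_system_algebra S lm \<Gamma> p c \<longleftrightarrow>
     (\<forall>s1\<in>S. \<forall>s2\<in>S. lm s1 \<inter> lm s2 = {} \<longrightarrow> p s1 s2 \<in> S) \<and>
     (\<forall>s\<in>S. \<forall>e\<in>\<Gamma> s. c s e \<in> S) \<and>
     (\<forall>s1\<in>S. \<forall>s2\<in>S. lm s1 \<inter> lm s2 = {} \<longrightarrow>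
        (\<forall>i ou. i \<in> lm s1 \<and> ou \<in> lm s1 \<longrightarrow> ({i, ou} \<in> \<Gamma> (p s1 s2) \<longleftrightarrow> {i, ou} \<in> \<Gamma> s1)) \<and>
        (\<forall>i ou. i \<in> lm s2 \<and> ou \<in> lm s2 \<longrightarrow> ({i, ou} \<in> \<Gamma> (p s1 s2) \<longleftrightarrow> {i, ou} \<in> \<Gamma> s2)))"

definition composition_order_invariant ::
  "'s set \<Rightarrow> ('s \<Rightarrow> 'l set) \<Rightarrow> ('s \<Rightarrow> 'l set set) \<Rightarrow> ('s \<Rightarrow> 's \<Rightarrow> 's) \<Rightarrow> ('s \<Rightarrow> 'l set \<Rightarrow> 's) \<Rightarrow> bool" where
  "composition_order_invariant S lm \<Gamma> p c \<longleftrightarrow>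
     (\<forall>s\<in>S. \<forall>e\<in>\<Gamma> s. \<forall>e'\<in>\<Gamma> (c s e).
        e' \<in> \<Gamma> s \<and> e \<in> \<Gamma> (c s e') \<and> c (c s e) e' = c (c s e') e) \<and>
     (\<forall>s1\<in>S. \<forall>s2\<in>S. \<forall>s3\<in>S.
        lm s1 \<inter> lm s2 = {} \<and> lm s1 \<inter> lm s3 = {} \<and> lm s2 \<inter> lm s3 = {} \<longrightarrow>
        p (p s1 s2) s3 = p s1 (p s2 s3)) \<and>
     (\<forall>s1\<in>S. \<forall>s2\<in>S. lm s1 \<inter> lm s2 = {} \<longrightarrow> p s1 s2 = p s2 s1) \<and>
     (\<forall>s1\<in>S. \<forall>s2\<in>S. \<forall>e\<in>\<Gamma> s1. lm s1 \<inter> lm s2 = {} \<longrightarrow>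
        p (c s1 e) s2 = c (p s1 s2) e)"

end

theory Submission
  imports Defs
begin

definition wfs :: "'p::order set \<Rightarrow> bool" where
  "wfs W \<longleftrightarrow> (\<forall>S. S \<subseteq> W \<longrightarrow> S \<noteq> {} \<longrightarrow> (\<exists>m\<in>S. \<forall>x\<in>S. \<not> x < m))"

lemma WO_chain: "D \<in> WO \<Longrightarrow> x \<in> D \<Longrightarrow> y \<in> D \<Longrightarrow> x \<le> y \<or> y \<le> x"
  unfolding WO_def well_ordered_subset_def by simp

lemma WO_min: "D \<in> WO \<Longrightarrow> S \<subseteq> D \<Longrightarrow> S \<noteq> {} \<Longrightarrow> \<exists>a\<in>S. \<forall>b\<in>S. a \<le> b"
  unfolding WO_def well_ordered_subset_def by simp

lemma WO_I: "(\<And>x y. x \<in> D \<Longrightarrow> y \<in> D \<Longrightarrow> x \<le> y \<or> y \<le> x) \<Longrightarrow>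
   (\<And>S. S \<subseteq> D \<Longrightarrow> S \<noteq> {} \<Longrightarrow> \<exists>a\<in>S. \<forall>b\<in>S. a \<le> b) \<Longrightarrow> D \<in> WO"
  unfolding WO_def well_ordered_subset_def by simp

lemma WO_wfs: "A \<in> WO \<Longrightarrow> wfs A"
  unfolding wfs_def
proof (intro allI impI)
  fix S assume "A \<in> WO" "S \<subseteq> A" "S \<noteq> {}"
  then obtain a where "a \<in> S" "\<forall>b\<in>S. a \<le> b" using WO_min by blast
  then show "\<exists>m\<in>S. \<forall>x\<in>S. \<not> x < m" by (auto dest: leD)
qed

lemma wfs_subset: "wfs W \<Longrightarrow> V \<subseteq> W \<Longrightarrow> wfs V"
  unfolding wfs_def by blast

lemma wfs_Un: assumes "wfs W1" "wfs W2" shows "wfs (W1 \<union> W2)"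
  unfolding wfs_def
proof (intro allI impI)
  fix S assume S: "S \<subseteq> W1 \<union> W2" "S \<noteq> {}"
  show "\<exists>m\<in>S. \<forall>x\<in>S. \<not> x < m"
  proof (cases "S \<inter> W1 = {}")
    case True
    then have "S \<subseteq> W2" using S by blast
    then show ?thesis using assms(2) S unfolding wfs_def by blast
  next
    case False
    then obtain m1 where m1: "m1 \<in> S \<inter> W1" "\<forall>x\<in>S \<inter> W1. \<not> x < m1"
      using assms(1) unfolding wfs_def by (meson inf_le2)
    define C where "C = {x\<in>S. x < m1}"
    show ?thesis
    proof (cases "C = {}")
      case True then show ?thesis using m1 unfolding C_def by blast
    next
      case False
      have "C \<subseteq> W2" using S m1 unfolding C_def by blast
      then obtain c where c: "c \<in> C" "\<forall>x\<in>C. \<not> x < c"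
        using assms(2) False unfolding wfs_def by blast
      have "\<forall>x\<in>S. \<not> x < c"
        using c unfolding C_def by (auto dest: order.strict_trans)
      then show ?thesis using c unfolding C_def by blast
    qed
  qed
qed

lemma wfs_no_descent:
  assumes "wfs W" "B \<subseteq> W" "\<forall>b\<in>B. \<exists>x\<in>B. x < b" shows "B = {}"
proof (rule ccontr)
  assume "B \<noteq> {}"
  then obtain m where "m \<in> B" "\<forall>x\<in>B. \<not> x < m" using assms(1,2) unfolding wfs_def by blast
  then show False using assms(3) by blast
qed

lemma WO_subset: "A \<in> WO \<Longrightarrow> B \<subseteq> A \<Longrightarrow> B \<in> WO"
  by (rule WO_I) (auto dest: WO_chain WO_min)

lemma symdiff_iff: "x \<in> symdiff A B \<longleftrightarrow> (x \<in> A \<longleftrightarrow> x \<notin> B)"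
  unfolding symdiff_def by blast

definition ps :: "('p::order set \<Rightarrow> 'p set) \<Rightarrow> 'p set \<Rightarrow> bool" where
  "ps f A \<longleftrightarrow> A \<in> WO \<and> (\<forall>y a. a \<in> A \<longrightarrow> y \<le> a \<longrightarrow> (y \<in> A \<longleftrightarrow> y \<in> f A))"

definition pre :: "'p::order set \<Rightarrow> 'p set \<Rightarrow> bool" where
  "pre A B \<longleftrightarrow> A \<subseteq> B \<and> (\<forall>b\<in>B. \<forall>a\<in>A. b \<le> a \<longrightarrow> b \<in> A)"

lemma causal_agree:
  assumes caus: "\<forall>A\<in>WO. \<forall>B\<in>WO. \<forall>y\<in>symdiff (f A) (f B). \<exists>x\<in>symdiff A B. x < y"
    and "A \<in> WO" "B \<in> WO" "\<forall>x. x < y \<longrightarrow> (x \<in> A \<longleftrightarrow> x \<in> B)"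
  shows "y \<in> f A \<longleftrightarrow> y \<in> f B"
proof (rule ccontr)
  assume "\<not> (y \<in> f A \<longleftrightarrow> y \<in> f B)"
  then have "y \<in> symdiff (f A) (f B)" unfolding symdiff_iff by blast
  then obtain x where "x \<in> symdiff A B" "x < y" using caus assms(2,3) by blast
  then show False using assms(4) unfolding symdiff_iff by blast
qed

lemma fix_exists:
  fixes f :: "'p::order set \<Rightarrow> 'p set"
  assumes into: "\<forall>A\<in>WO. f A \<in> WO"
    and caus: "\<forall>A\<in>WO. \<forall>B\<in>WO. \<forall>y\<in>symdiff (f A) (f B). \<exists>x\<in>symdiff A B. x < y"
  shows "\<exists>A\<in>WO. f A = A"
proof -
  define r where "r = {(A,B). ps f A \<and> ps f B \<and> pre A B}"
  have emp: "ps f {}" unfolding ps_def WO_def well_ordered_subset_def by auto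
  have Field: "Field r = {A. ps f A}"
    unfolding r_def Field_def pre_def by auto
  have po: "Partial_order r"
    unfolding partial_order_on_def preorder_on_def refl_on_def antisym_def trans_def Field
    unfolding r_def pre_def by (auto; blast)
  have "\<exists>u\<in>Field r. \<forall>a\<in>C. (a, u) \<in> r" if C: "C \<in> Chains r" for C
  proof -
    have Cps: "\<And>A. A \<in> C \<Longrightarrow> ps f A" using C unfolding Chains_def r_def by auto
    have Cch: "\<And>A B. A \<in> C \<Longrightarrow> B \<in> C \<Longrightarrow> pre A B \<or> pre B A"
      using C unfolding Chains_def r_def by auto
    define U where "U = \<Union>C"
    have CWO: "\<And>A. A \<in> C \<Longrightarrow> A \<in> WO" using Cps unfolding ps_def by auto
    have preU: "pre A U" if "A \<in> C" for A
      unfolding pre_def U_def using that Cch unfolding pre_def by blast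
    have chain: "\<forall>x\<in>U. \<forall>y\<in>U. x \<le> y \<or> y \<le> x"
    proof (intro ballI)
      fix x y assume "x \<in> U" "y \<in> U"
      then obtain A B where "A \<in> C" "B \<in> C" "x \<in> A" "y \<in> B" unfolding U_def by blast
      note xy = this
      have "x \<in> B \<or> y \<in> A" using Cch[OF xy(1,2)] xy(3,4) unfolding pre_def by blast
      then show "x \<le> y \<or> y \<le> x"
      proof
        assume "x \<in> B" then show ?thesis using WO_chain[OF CWO[OF xy(2)]] xy(4) by blast
      next
        assume "y \<in> A" then show ?thesis using WO_chain[OF CWO[OF xy(1)]] xy(3) by blast
      qed
    qed
    have wo: "\<exists>a\<in>S. \<forall>b\<in>S. a \<le> b" if S: "S \<subseteq> U" "S \<noteq> {}" for S
    proof -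
      obtain t where "t \<in> S" using S by blast
      then obtain A where A: "A \<in> C" "t \<in> A" using S unfolding U_def by blast
      then obtain m where m: "m \<in> S \<inter> A" "\<forall>b\<in>S \<inter> A. m \<le> b"
        using WO_min[OF CWO[OF A(1)], of "S \<inter> A"] \<open>t \<in> S\<close> A by blast
      have "\<forall>b\<in>S. m \<le> b"
      proof
        fix b assume b: "b \<in> S"
        have "b \<in> U" using b S by blast
        have "m \<in> U" using m S by blast
        show "m \<le> b"
        proof (rule ccontr)
          assume "\<not> m \<le> b"
          then have "b \<le> m" using chain \<open>b \<in> U\<close> \<open>m \<in> U\<close> by blast
          then have "b \<in> A" using preU[OF A(1)] m b \<open>b \<in> U\<close> unfolding pre_def by blast
          then show False using m b \<open>\<not> m \<le> b\<close> by blast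
        qed
      qed
      then show ?thesis using m by blast
    qed
    have UWO: "U \<in> WO" using chain wo by (intro WO_I) auto
    have psU: "ps f U"
      unfolding ps_def
    proof (intro conjI UWO allI impI)
      fix y a assume a: "a \<in> U" "y \<le> a"
      then obtain A where A: "A \<in> C" "a \<in> A" unfolding U_def by blast
      have yA: "y \<in> U \<longleftrightarrow> y \<in> A" using preU[OF A(1)] A a unfolding pre_def by blast
      have "y \<in> f U \<longleftrightarrow> y \<in> f A"
      proof (rule causal_agree[OF caus UWO CWO[OF A(1)]], intro allI impI)
        fix x assume "x < y"
        then have "x \<le> a" using a by simp
        then show "x \<in> U \<longleftrightarrow> x \<in> A" using preU[OF A(1)] A unfolding pre_def by blast
      qed
      moreover have "y \<in> A \<longleftrightarrow> y \<in> f A" using Cps[OF A(1)] A a unfolding ps_def by blast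
      ultimately show "y \<in> U \<longleftrightarrow> y \<in> f U" using yA by blast
    qed
    have "\<forall>a\<in>C. (a, U) \<in> r" using psU preU Cps unfolding r_def by auto
    then show ?thesis using psU unfolding Field by blast
  qed
  from Zorns_po_lemma[OF po this] obtain M where
    M0: "M \<in> Field r" "\<forall>a\<in>Field r. (M, a) \<in> r \<longrightarrow> a = M" by blast
  have M: "ps f M" "\<And>B. ps f B \<Longrightarrow> pre M B \<Longrightarrow> B = M"
    using M0 unfolding Field by (auto simp: r_def)
  have MWO: "M \<in> WO" using M unfolding ps_def by auto
  have fMWO: "f M \<in> WO" using into MWO by blast
  have sub: "M \<subseteq> f M" using M(1) unfolding ps_def by blast
  have "f M = M"
  proof (rule ccontr)
    assume "f M \<noteq> M"
    then have "f M - M \<noteq> {}" using sub by blast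
    then obtain m where m: "m \<in> f M - M" "\<forall>b\<in>f M - M. m \<le> b"
      using WO_min[OF fMWO, of "f M - M"] by blast
    have notbelow: "\<not> m \<le> a" if "a \<in> M" for a
      using M(1) that m unfolding ps_def by blast
    define M' where "M' = insert m M"
    have M'WO: "M' \<in> WO" using WO_subset[OF fMWO] sub m unfolding M'_def by blast
    have agree: "y \<in> f M' \<longleftrightarrow> y \<in> f M" if "\<not> m < y" for y
      by (rule causal_agree[OF caus M'WO MWO]) (use that in \<open>auto simp: M'_def\<close>)
    have "ps f M'"
      unfolding ps_def
    proof (intro conjI M'WO allI impI)
      fix y a assume a: "a \<in> M'" "y \<le> a"
      show "y \<in> M' \<longleftrightarrow> y \<in> f M'"
      proof (cases "a \<in> M")
        case True
        have "\<not> m < y" using notbelow[OF True] a(2) by auto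
        moreover have "y \<noteq> m" using notbelow[OF True] a(2) by auto
        ultimately show ?thesis using agree M(1) True a unfolding ps_def M'_def by blast
      next
        case False
        then have "a = m" using a unfolding M'_def by blast
        then have "\<not> m < y" using a by auto
        then have "y \<in> f M' \<longleftrightarrow> y \<in> f M" by (rule agree)
        moreover have "y \<in> M \<longleftrightarrow> y \<in> f M" if "y \<noteq> m"
          using sub m that a \<open>a = m\<close> by force
        ultimately show ?thesis using m unfolding M'_def by blast
      qed
    qed
    moreover have "pre M M'" unfolding pre_def M'_def using notbelow by blast
    ultimately have "M' = M" using M(2) by blast
    then show False using m unfolding M'_def by blast
  qed
  then show ?thesis using MWO by blast
qed

lemma sys_simps[simp]:
  "Ins (a, b, c) = a" "Outs (a, b, c) = b" "fn (a, b, c) = c"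
  by (simp_all add: Ins_def Outs_def fn_def)

lemma cs_fin: "causal_system s \<Longrightarrow> finite (Ins s) \<and> finite (Outs s) \<and> Ins s \<inter> Outs s = {}"
  by (simp add: causal_system_def)

lemma cs_fn0: "causal_system s \<Longrightarrow> fn s \<in> extensional_funcset (Inputs (Ins s)) (Inputs (Outs s))"
  by (simp add: causal_system_def)

lemma cs_fn: "causal_system s \<Longrightarrow> X \<in> Inputs (Ins s) \<Longrightarrow> fn s X \<in> Inputs (Outs s)"
  by (erule PiE_mem[OF cs_fn0])

lemma cs_ext: "causal_system s \<Longrightarrow> X \<notin> Inputs (Ins s) \<Longrightarrow> fn s X = undefined"
  by (erule PiE_arb[OF cs_fn0])

lemma cs_val: "causal_system s \<Longrightarrow> X \<in> Inputs (Ins s) \<Longrightarrow> ou \<in> Outs s \<Longrightarrow> fn s X ou \<in> WO"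
  using cs_fn by blast

lemma cs_caus: "causal_system s \<Longrightarrow> X \<in> Inputs (Ins s) \<Longrightarrow> X' \<in> Inputs (Ins s) \<Longrightarrow> ou \<in> Outs s
   \<Longrightarrow> y \<in> symdiff (fn s X ou) (fn s X' ou) \<Longrightarrow> \<exists>i\<in>Ins s. \<exists>x\<in>symdiff (X i) (X' i). x < y"
proof -
  assume a: "causal_system s" "X \<in> Inputs (Ins s)" "X' \<in> Inputs (Ins s)" "ou \<in> Outs s"
    "y \<in> symdiff (fn s X ou) (fn s X' ou)"
  have "\<forall>X\<in>Inputs (Ins s). \<forall>X'\<in>Inputs (Ins s). \<forall>ou\<in>Outs s.
        \<forall>y\<in>symdiff (fn s X ou) (fn s X' ou).
          \<exists>i\<in>Ins s. \<exists>x\<in>symdiff (X i) (X' i). x < y" using a(1) by (simp add: causal_system_def)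
  then show ?thesis using a(2-5) by blast
qed

lemma cs_intro:
  assumes "finite (Ins s)" "finite (Outs s)" "Ins s \<inter> Outs s = {}"
    "\<And>X. X \<in> Inputs (Ins s) \<Longrightarrow> fn s X \<in> Inputs (Outs s)"
    "\<And>X. X \<notin> Inputs (Ins s) \<Longrightarrow> fn s X = undefined"
    "\<And>X X' ou y. X \<in> Inputs (Ins s) \<Longrightarrow> X' \<in> Inputs (Ins s) \<Longrightarrow> ou \<in> Outs s
       \<Longrightarrow> y \<in> symdiff (fn s X ou) (fn s X' ou) \<Longrightarrow> \<exists>i\<in>Ins s. \<exists>x\<in>symdiff (X i) (X' i). x < y"
  shows "causal_system s"
  unfolding causal_system_def
proof (intro conjI ballI assms(1-3))
  show "fn s \<in> Inputs (Ins s) \<rightarrow>\<^sub>E Inputs (Outs s)"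
    using assms(4,5) by (rule PiE_I)
  show "\<exists>i\<in>Ins s. \<exists>x\<in>symdiff (X i) (X' i). x < y"
    if "X \<in> Inputs (Ins s)" "X' \<in> Inputs (Ins s)" "ou \<in> Outs s" "y \<in> symdiff (fn s X ou) (fn s X' ou)"
    for X X' ou y using assms(6)[OF that] .
qed

lemma upd_in: "X \<in> Inputs (I - {i}) \<Longrightarrow> i \<in> I \<Longrightarrow> A \<in> WO \<Longrightarrow> X(i := A) \<in> Inputs I"
  using PiE_fun_upd[of A "\<lambda>_. WO" i X "I - {i}"] by (simp add: insert_absorb)

lemma symdiff_self[simp]: "symdiff A A = {}" unfolding symdiff_def by blast

lemma fix_unique1:
  assumes cs: "causal_system s" and i: "i \<in> Ins s" and ou: "ou \<in> Outs s"
    and X: "X \<in> Inputs (Ins s - {i})"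
    and A: "A \<in> WO" "fn s (X(i := A)) ou = A" and B: "B \<in> WO" "fn s (X(i := B)) ou = B"
  shows "A = B"
proof -
  have "symdiff A B = {}"
  proof (rule wfs_no_descent[OF wfs_Un[OF WO_wfs[OF A(1)] WO_wfs[OF B(1)]]])
    show "symdiff A B \<subseteq> A \<union> B" unfolding symdiff_def by blast
    show "\<forall>b\<in>symdiff A B. \<exists>x\<in>symdiff A B. x < b"
    proof
      fix y assume "y \<in> symdiff A B"
      then have "y \<in> symdiff (fn s (X(i := A)) ou) (fn s (X(i := B)) ou)" using A B by simp
      from cs_caus[OF cs upd_in[OF X i A(1)] upd_in[OF X i B(1)] ou this]
      obtain j x where "j \<in> Ins s" "x \<in> symdiff ((X(i := A)) j) ((X(i := B)) j)" "x < y" by blast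
      then show "\<exists>x\<in>symdiff A B. x < y" by (cases "j = i") auto
    qed
  qed
  then show ?thesis unfolding symdiff_def by blast
qed

lemma fix_ex1:
  assumes cs: "causal_system s" and i: "i \<in> Ins s" and ou: "ou \<in> Outs s"
    and X: "X \<in> Inputs (Ins s - {i})"
  shows "\<exists>!Xi. Xi \<in> WO \<and> fn s (X(i := Xi)) ou = Xi"
proof -
  have "\<exists>A\<in>WO. fn s (X(i := A)) ou = A"
  proof (rule fix_exists)
    show "\<forall>A\<in>WO. fn s (X(i := A)) ou \<in> WO"
      using cs_val[OF cs upd_in[OF X i] ou] by blast
    show "\<forall>A\<in>WO. \<forall>B\<in>WO. \<forall>y\<in>symdiff (fn s (X(i := A)) ou) (fn s (X(i := B)) ou).
           \<exists>x\<in>symdiff A B. x < y"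
    proof (intro ballI)
      fix A B y assume AB: "A \<in> WO" "B \<in> WO" and y: "y \<in> symdiff (fn s (X(i := A)) ou) (fn s (X(i := B)) ou)"
      from cs_caus[OF cs upd_in[OF X i AB(1)] upd_in[OF X i AB(2)] ou y]
      obtain j x where "j \<in> Ins s" "x \<in> symdiff ((X(i := A)) j) ((X(i := B)) j)" "x < y" by blast
      then show "\<exists>x\<in>symdiff A B. x < y" by (cases "j = i") auto
    qed
  qed
  then show ?thesis using fix_unique1[OF cs i ou X] by blast
qed

lemma fixval:
  assumes "causal_system s" "i \<in> Ins s" "ou \<in> Outs s" "X \<in> Inputs (Ins s - {i})"
  shows "fixval s i ou X \<in> WO" "fn s (X(i := fixval s i ou X)) ou = fixval s i ou X"
  using theI'[OF fix_ex1[OF assms]] unfolding fixval_def by blast+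

lemma fixval_eq:
  assumes "causal_system s" "i \<in> Ins s" "ou \<in> Outs s" "X \<in> Inputs (Ins s - {i})"
    "A \<in> WO" "fn s (X(i := A)) ou = A"
  shows "fixval s i ou X = A"
  using fix_unique1[OF assms(1-4) fixval[OF assms(1-4)] assms(5,6)] .

lemma gamma_simps:
  "Ins (gamma s i ou) = Ins s - {i}" "Outs (gamma s i ou) = Outs s - {ou}"
  "fn (gamma s i ou) X = (if X \<in> Inputs (Ins s - {i}) then
             restrict (fn s (X(i := fixval s i ou X))) (Outs s - {ou}) else undefined)"
  unfolding gamma_def by simp_all

lemma gamma_causal:
  assumes cs: "causal_system s" and i: "i \<in> Ins s" and o: "ou \<in> Outs s"
  shows "causal_system (gamma s i ou)"
proof (rule cs_intro)
  show "finite (Ins (gamma s i ou))" "finite (Outs (gamma s i ou))"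
    "Ins (gamma s i ou) \<inter> Outs (gamma s i ou) = {}"
    using cs_fin[OF cs] by (auto simp: gamma_simps)
  show "fn (gamma s i ou) X \<in> Inputs (Outs (gamma s i ou))" if "X \<in> Inputs (Ins (gamma s i ou))" for X
  proof -
    have X: "X \<in> Inputs (Ins s - {i})" using that by (simp add: gamma_simps)
    have "fn s (X(i := fixval s i ou X)) \<in> Inputs (Outs s)"
      using cs_fn[OF cs upd_in[OF X i fixval(1)[OF cs i o X]]] .
    then show ?thesis using X by (auto simp: gamma_simps PiE_iff)
  qed
  show "fn (gamma s i ou) X = undefined" if "X \<notin> Inputs (Ins (gamma s i ou))" for X
    using that by (simp add: gamma_simps)
  show "\<exists>j\<in>Ins (gamma s i ou). \<exists>x\<in>symdiff (X j) (X' j). x < y"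
    if XX: "X \<in> Inputs (Ins (gamma s i ou))" "X' \<in> Inputs (Ins (gamma s i ou))"
      and o': "o' \<in> Outs (gamma s i ou)"
      and y: "y \<in> symdiff (fn (gamma s i ou) X o') (fn (gamma s i ou) X' o')" for X X' o' y
  proof -
    have X: "X \<in> Inputs (Ins s - {i})" and X': "X' \<in> Inputs (Ins s - {i})"
      using XX by (simp_all add: gamma_simps)
    define A where "A = fixval s i ou X"
    define A' where "A' = fixval s i ou X'"
    have A: "A \<in> WO" "fn s (X(i := A)) ou = A" using fixval[OF cs i o X] unfolding A_def by auto
    have A': "A' \<in> WO" "fn s (X'(i := A')) ou = A'" using fixval[OF cs i o X'] unfolding A'_def by auto
    have Y: "X(i := A) \<in> Inputs (Ins s)" using upd_in[OF X i A(1)] .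
    have Y': "X'(i := A') \<in> Inputs (Ins s)" using upd_in[OF X' i A'(1)] .
    define good where "good z \<longleftrightarrow> (\<exists>j\<in>Ins s - {i}. \<exists>x\<in>symdiff (X j) (X' j). x < z)" for z
    have good_mono: "good z" if "good x" "x < z" for x z
      using that unfolding good_def by (meson order.strict_trans)
    have step: "good z \<or> (\<exists>x\<in>symdiff A A'. x < z)"
      if "z \<in> symdiff (fn s (X(i := A)) q) (fn s (X'(i := A')) q)" "q \<in> Outs s" for z q
    proof -
      from cs_caus[OF cs Y Y' that(2) that(1)]
      obtain j x where "j \<in> Ins s" "x \<in> symdiff ((X(i := A)) j) ((X'(i := A')) j)" "x < z" by blast
      then show ?thesis unfolding good_def by (cases "j = i") auto
    qed
    have "{z \<in> symdiff A A'. \<not> good z} = {}"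
    proof (rule wfs_no_descent[OF wfs_Un[OF WO_wfs[OF A(1)] WO_wfs[OF A'(1)]]])
      show "{z \<in> symdiff A A'. \<not> good z} \<subseteq> A \<union> A'" unfolding symdiff_def by blast
      show "\<forall>b\<in>{z \<in> symdiff A A'. \<not> good z}. \<exists>x\<in>{z \<in> symdiff A A'. \<not> good z}. x < b"
      proof
        fix b assume b: "b \<in> {z \<in> symdiff A A'. \<not> good z}"
        then have "good b \<or> (\<exists>x\<in>symdiff A A'. x < b)" using step[of b ou] A A' o by simp
        then obtain x where "x \<in> symdiff A A'" "x < b" using b by blast
        then show "\<exists>x\<in>{z \<in> symdiff A A'. \<not> good z}. x < b" using b good_mono by blast
      qed
    qed
    then have allgood: "good z" if "z \<in> symdiff A A'" for z using that by blast
    have o'': "o' \<in> Outs s" "o' \<noteq> ou" using o' by (auto simp: gamma_simps)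
    have "y \<in> symdiff (fn s (X(i := A)) o') (fn s (X'(i := A')) o')"
      using y X X' o'' by (simp add: gamma_simps A_def A'_def)
    from step[OF this o''(1)] have "good y" using allgood good_mono by blast
    then show ?thesis unfolding good_def by (simp add: gamma_simps)
  qed
qed

lemma par_simps:
  "Ins (par s1 s2) = Ins s1 \<union> Ins s2" "Outs (par s1 s2) = Outs s1 \<union> Outs s2"
  "fn (par s1 s2) X = (if X \<in> Inputs (Ins s1 \<union> Ins s2) then
             (\<lambda>l. if l \<in> Outs s1 then fn s1 (restrict X (Ins s1)) l
                  else if l \<in> Outs s2 then fn s2 (restrict X (Ins s2)) l
                  else undefined)
           else undefined)"
  unfolding par_def by simp_all

lemma restr_in: "X \<in> Inputs B \<Longrightarrow> A \<subseteq> B \<Longrightarrow> restrict X A \<in> Inputs A"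
  by (auto simp: PiE_iff)

lemma par_causal:
  assumes c1: "causal_system s1" and c2: "causal_system s2" and d: "lam s1 \<inter> lam s2 = {}"
  shows "causal_system (par s1 s2)"
proof (rule cs_intro)
  have d': "Ins s1 \<inter> Ins s2 = {}" "Ins s1 \<inter> Outs s2 = {}" "Outs s1 \<inter> Ins s2 = {}" "Outs s1 \<inter> Outs s2 = {}"
    using d unfolding lam_def by auto
  show "finite (Ins (par s1 s2))" "finite (Outs (par s1 s2))"
    "Ins (par s1 s2) \<inter> Outs (par s1 s2) = {}"
    using cs_fin[OF c1] cs_fin[OF c2] d' by (auto simp: par_simps)
  show "fn (par s1 s2) X \<in> Inputs (Outs (par s1 s2))" if X: "X \<in> Inputs (Ins (par s1 s2))" for X
  proof -
    have X1: "restrict X (Ins s1) \<in> Inputs (Ins s1)" and X2: "restrict X (Ins s2) \<in> Inputs (Ins s2)"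
      using X by (auto simp: par_simps intro: restr_in)
    show ?thesis
    proof (rule PiE_I)
      fix l assume "l \<in> Outs (par s1 s2)"
      then show "fn (par s1 s2) X l \<in> WO"
        using X cs_val[OF c1 X1] cs_val[OF c2 X2] by (auto simp: par_simps)
    next
      fix l assume "l \<notin> Outs (par s1 s2)"
      then show "fn (par s1 s2) X l = undefined" using X by (auto simp: par_simps)
    qed
  qed
  show "fn (par s1 s2) X = undefined" if "X \<notin> Inputs (Ins (par s1 s2))" for X
    using that by (simp add: par_simps)
  show "\<exists>i\<in>Ins (par s1 s2). \<exists>x\<in>symdiff (X i) (X' i). x < y"
    if XX: "X \<in> Inputs (Ins (par s1 s2))" "X' \<in> Inputs (Ins (par s1 s2))"
      and o: "ou \<in> Outs (par s1 s2)"
      and y: "y \<in> symdiff (fn (par s1 s2) X ou) (fn (par s1 s2) X' ou)" for X X' ou y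
  proof (cases "ou \<in> Outs s1")
    case True
    have X1: "restrict X (Ins s1) \<in> Inputs (Ins s1)" "restrict X' (Ins s1) \<in> Inputs (Ins s1)"
      using XX by (auto simp: par_simps intro: restr_in)
    have "y \<in> symdiff (fn s1 (restrict X (Ins s1)) ou) (fn s1 (restrict X' (Ins s1)) ou)"
      using y XX True by (simp add: par_simps)
    from cs_caus[OF c1 X1 True this] show ?thesis by (auto simp: par_simps)
  next
    case False
    then have o2: "ou \<in> Outs s2" using o by (simp add: par_simps)
    have X2: "restrict X (Ins s2) \<in> Inputs (Ins s2)" "restrict X' (Ins s2) \<in> Inputs (Ins s2)"
      using XX by (auto simp: par_simps intro: restr_in)
    have "y \<in> symdiff (fn s2 (restrict X (Ins s2)) ou) (fn s2 (restrict X' (Ins s2)) ou)"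
      using y XX False o2 by (simp add: par_simps)
    from cs_caus[OF c2 X2 o2 this] show ?thesis by (auto simp: par_simps)
  qed
qed

lemma Gam_iff: "e \<in> Gam s \<longleftrightarrow> (\<exists>i ou. e = {i, ou} \<and> i \<in> Ins s \<and> ou \<in> Outs s)"
  unfolding Gam_def by blast

lemma conn_eq:
  assumes "Ins s \<inter> Outs s = {}" "i \<in> Ins s" "ou \<in> Outs s"
  shows "conn s {i, ou} = gamma s i ou"
proof -
  have "(THE x. x \<in> {i, ou} \<and> x \<in> Ins s) = i"
    by (rule the_equality) (use assms in auto)
  moreover have "(THE x. x \<in> {i, ou} \<and> x \<in> Outs s) = ou"
    by (rule the_equality) (use assms in auto)
  ultimately show ?thesis unfolding conn_def by simp
qed

lemma edge_inj:
  assumes "Ins s \<inter> Outs s = {}" "i \<in> Ins s" "ou \<in> Outs s" "i' \<in> Ins s" "o' \<in> Outs s"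
    "{i, ou} = {i', o'}"
  shows "i = i' \<and> ou = o'"
  using assms by (auto simp: doubleton_eq_iff)

lemma causal_systems_iff: "s \<in> causal_systems \<longleftrightarrow> causal_system s"
  unfolding causal_systems_def by simp

lemma cwd: "connection_well_defined (causal_systems :: ('l, 'p::order) sys set)"
  unfolding connection_well_defined_def causal_systems_iff
proof (intro ballI)
  fix s i ou and X :: "'l \<Rightarrow> 'p set" assume "s \<in> (causal_systems :: ('l, 'p) sys set)" "i \<in> Ins s" "ou \<in> Outs s" "X \<in> Inputs (Ins s - {i})"
  then show "\<exists>!Xi. Xi \<in> WO \<and> fn s (X(i := Xi)) ou = Xi"
    using fix_ex1[of s i ou X] by (simp add: causal_systems_iff)
qed

lemma fsa: "functional_system_algebra (causal_systems :: ('l, 'p::order) sys set) lam Gam par conn"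
  unfolding functional_system_algebra_def
proof (intro conjI ballI impI allI)
  fix s1 s2 :: "('l, 'p) sys" assume "s1 \<in> causal_systems" "s2 \<in> causal_systems" "lam s1 \<inter> lam s2 = {}"
  then show "par s1 s2 \<in> causal_systems" using par_causal by (simp add: causal_systems_def)
next
  fix s :: "('l, 'p) sys" and e assume s: "s \<in> causal_systems" and e: "e \<in> Gam s"
  then obtain i ou where io: "e = {i, ou}" "i \<in> Ins s" "ou \<in> Outs s" unfolding Gam_iff by blast
  have cs: "causal_system s" using s by (simp add: causal_systems_iff)
  have "conn s e = gamma s i ou"
    unfolding io(1) by (rule conn_eq[OF cs_fin[OF cs, THEN conjunct2, THEN conjunct2] io(2,3)])
  then show "conn s e \<in> causal_systems"
    using gamma_causal[OF cs io(2,3)] by (simp add: causal_systems_iff)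
next
  fix s1 s2 :: "('l, 'p) sys" and i ou assume "s1 \<in> causal_systems" "s2 \<in> causal_systems"
    "lam s1 \<inter> lam s2 = {}" "i \<in> lam s1 \<and> ou \<in> lam s1"
  then show "{i, ou} \<in> Gam (par s1 s2) \<longleftrightarrow> {i, ou} \<in> Gam s1"
    unfolding Gam_iff lam_def by (auto simp: par_simps doubleton_eq_iff)
next
  fix s1 s2 :: "('l, 'p) sys" and i ou assume "s1 \<in> causal_systems" "s2 \<in> causal_systems"
    "lam s1 \<inter> lam s2 = {}" "i \<in> lam s2 \<and> ou \<in> lam s2"
  then show "{i, ou} \<in> Gam (par s1 s2) \<longleftrightarrow> {i, ou} \<in> Gam s2"
    unfolding Gam_iff lam_def by (auto simp: par_simps doubleton_eq_iff)
qed

lemma upd_in2: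
  assumes "X \<in> Inputs (I - {i} - {i'})" "i \<in> I" "i' \<in> I" "i \<noteq> i'" "A \<in> WO" "B \<in> WO"
  shows "X(i := A, i' := B) \<in> Inputs I"
proof -
  have e: "I - {i'} - {i} = I - {i} - {i'}" by blast
  have X2: "X \<in> Inputs (I - {i'} - {i})" unfolding e by (rule assms(1))
  have "i \<in> I - {i'}" using assms by blast
  from upd_in[OF X2 this assms(5)] have "X(i := A) \<in> Inputs (I - {i'})" .
  from upd_in[OF this assms(3,6)] show ?thesis .
qed

lemma joint_unique:
  assumes cs: "causal_system s" and ii: "i \<in> Ins s" "i' \<in> Ins s" "i \<noteq> i'"
    and oo: "ou \<in> Outs s" "o' \<in> Outs s"
    and X: "X \<in> Inputs (Ins s - {i} - {i'})"
    and W: "A \<in> WO" "B \<in> WO" "A' \<in> WO" "B' \<in> WO"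
    and E: "fn s (X(i := A, i' := B)) ou = A" "fn s (X(i := A, i' := B)) o' = B"
       "fn s (X(i := A', i' := B')) ou = A'" "fn s (X(i := A', i' := B')) o' = B'"
  shows "A = A' \<and> B = B'"
proof -
  define D where "D = symdiff A A' \<union> symdiff B B'"
  have Y: "X(i := A, i' := B) \<in> Inputs (Ins s)" using upd_in2[OF X ii W(1,2)] .
  have Y': "X(i := A', i' := B') \<in> Inputs (Ins s)" using upd_in2[OF X ii W(3,4)] .
  have step: "\<exists>x\<in>D. x < y" if "y \<in> symdiff (fn s (X(i := A, i' := B)) q) (fn s (X(i := A', i' := B')) q)"
    "q \<in> Outs s" for y q
  proof -
    from cs_caus[OF cs Y Y' that(2) that(1)]
    obtain j x where "j \<in> Ins s" "x \<in> symdiff ((X(i := A, i' := B)) j) ((X(i := A', i' := B')) j)" "x < y"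
      by blast
    then show ?thesis unfolding D_def using ii(3)
      by (cases "j = i'"; cases "j = i") auto
  qed
  have "D = {}"
  proof (rule wfs_no_descent)
    show "wfs (A \<union> A' \<union> (B \<union> B'))"
      using W by (intro wfs_Un WO_wfs)
    show "D \<subseteq> A \<union> A' \<union> (B \<union> B')" unfolding D_def symdiff_def by blast
    show "\<forall>b\<in>D. \<exists>x\<in>D. x < b"
    proof
      fix b assume "b \<in> D"
      then have "b \<in> symdiff (fn s (X(i := A, i' := B)) ou) (fn s (X(i := A', i' := B')) ou) \<or>
                 b \<in> symdiff (fn s (X(i := A, i' := B)) o') (fn s (X(i := A', i' := B')) o')"
        unfolding D_def E by blast
      then show "\<exists>x\<in>D. x < b" using step oo by blast
    qed
  qed
  then show ?thesis unfolding D_def symdiff_def by blast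
qed

lemma gg:
  assumes cs: "causal_system s" and i: "i \<in> Ins s" and o: "ou \<in> Outs s"
    and i': "i' \<in> Ins s" "i' \<noteq> i" and o': "o' \<in> Outs s" "o' \<noteq> ou"
    and X: "X \<in> Inputs (Ins s - {i} - {i'})"
  shows "\<exists>A B. A \<in> WO \<and> B \<in> WO \<and> fn s (X(i := A, i' := B)) ou = A \<and> fn s (X(i := A, i' := B)) o' = B \<and>
     fn (gamma (gamma s i ou) i' o') X = restrict (fn s (X(i := A, i' := B))) (Outs s - {ou} - {o'})"
proof -
  define s1 where "s1 = gamma s i ou"
  have c1: "causal_system s1" unfolding s1_def using gamma_causal[OF cs i o] .
  have i1: "i' \<in> Ins s1" and o1: "o' \<in> Outs s1" using i' o' by (auto simp: s1_def gamma_simps)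
  have X1: "X \<in> Inputs (Ins s1 - {i'})" using X by (simp add: s1_def gamma_simps)
  define B where "B = fixval s1 i' o' X"
  have B: "B \<in> WO" "fn s1 (X(i' := B)) o' = B" using fixval[OF c1 i1 o1 X1] unfolding B_def by auto
  have XB: "X(i' := B) \<in> Inputs (Ins s - {i})" using upd_in[OF X1 i1 B(1)] by (simp add: s1_def gamma_simps)
  define A where "A = fixval s i ou (X(i' := B))"
  have A: "A \<in> WO" "fn s (X(i' := B, i := A)) ou = A" using fixval[OF cs i o XB] unfolding A_def by auto
  have tw: "X(i' := B, i := A) = X(i := A, i' := B)" using i' by (simp add: fun_upd_twist)
  have fs1: "fn s1 (X(i' := B)) = restrict (fn s (X(i := A, i' := B))) (Outs s - {ou})"
    using XB by (simp add: s1_def gamma_simps A_def[symmetric] tw)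
  have "fn (gamma s1 i' o') X = restrict (fn s1 (X(i' := B))) (Outs s1 - {o'})"
    using X1 by (simp add: gamma_simps B_def)
  also have "\<dots> = restrict (fn s (X(i := A, i' := B))) (Outs s - {ou} - {o'})"
  proof -
    have "(Outs s - {ou}) \<inter> (Outs s - {ou} - {o'}) = Outs s - {ou} - {o'}" by blast
    then show ?thesis unfolding fs1 by (simp add: s1_def gamma_simps)
  qed
  finally have "fn (gamma s1 i' o') X = restrict (fn s (X(i := A, i' := B))) (Outs s - {ou} - {o'})" .
  moreover have "fn s (X(i := A, i' := B)) o' = B" using B(2) fs1 o' by simp
  ultimately show ?thesis using A B tw unfolding s1_def by metis
qed

lemma gamma_comm:
  assumes cs: "causal_system s" and i: "i \<in> Ins s" and o: "ou \<in> Outs s"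
    and i': "i' \<in> Ins s" "i' \<noteq> i" and o': "o' \<in> Outs s" "o' \<noteq> ou"
  shows "gamma (gamma s i ou) i' o' = gamma (gamma s i' o') i ou"
proof -
  have I: "Ins s - {i} - {i'} = Ins s - {i'} - {i}" by blast
  have O: "Outs s - {ou} - {o'} = Outs s - {o'} - {ou}" by blast
  have "fn (gamma (gamma s i ou) i' o') X = fn (gamma (gamma s i' o') i ou) X" for X
  proof (cases "X \<in> Inputs (Ins s - {i} - {i'})")
    case False
    then show ?thesis by (simp add: gamma_simps I)
  next
    case True
    then have X': "X \<in> Inputs (Ins s - {i'} - {i})" using I by simp
    obtain A B where AB: "A \<in> WO" "B \<in> WO" "fn s (X(i := A, i' := B)) ou = A" "fn s (X(i := A, i' := B)) o' = B"
      "fn (gamma (gamma s i ou) i' o') X = restrict (fn s (X(i := A, i' := B))) (Outs s - {ou} - {o'})"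
      using gg[OF cs i o i' o' True] by blast
    obtain B' A' where AB': "B' \<in> WO" "A' \<in> WO" "fn s (X(i' := B', i := A')) o' = B'" "fn s (X(i' := B', i := A')) ou = A'"
      "fn (gamma (gamma s i' o') i ou) X = restrict (fn s (X(i' := B', i := A'))) (Outs s - {o'} - {ou})"
      using gg[OF cs i'(1) o'(1) i i'(2)[symmetric] o o'(2)[symmetric] X'] by blast
    have tw: "X(i' := B', i := A') = X(i := A', i' := B')" using i' by (simp add: fun_upd_twist)
    have "A = A' \<and> B = B'"
      using joint_unique[OF cs i i'(1) i'(2)[symmetric] o o'(1) True AB(1,2) AB'(2,1) AB(3,4)] AB'(3,4) unfolding tw by blast
    then show ?thesis using AB(5) AB'(5) tw O by simp
  qed
  then show ?thesis unfolding gamma_def using I O by (simp add: fun_eq_iff)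
qed

lemma par_comm:
  assumes "Outs s1 \<inter> Outs s2 = {}"
  shows "par s1 s2 = par s2 s1"
  unfolding par_def using assms by (auto simp: fun_eq_iff Un_commute)

lemma par_assoc:
  assumes "Outs s1 \<inter> Outs s2 = {}" "Outs s1 \<inter> Outs s3 = {}" "Outs s2 \<inter> Outs s3 = {}"
  shows "par (par s1 s2) s3 = par s1 (par s2 s3)"
proof -
  have "fn (par (par s1 s2) s3) X = fn (par s1 (par s2 s3)) X" for X
  proof (cases "X \<in> Inputs (Ins s1 \<union> Ins s2 \<union> Ins s3)")
    case False
    then show ?thesis by (simp add: par_simps Un_assoc)
  next
    case True
    have r12: "restrict X (Ins s1 \<union> Ins s2) \<in> Inputs (Ins s1 \<union> Ins s2)"
      using True by (rule restr_in) blast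
    have r23: "restrict X (Ins s2 \<union> Ins s3) \<in> Inputs (Ins s2 \<union> Ins s3)"
      using True by (rule restr_in) blast
    have a: "(Ins s1 \<union> Ins s2) \<inter> Ins s1 = Ins s1" "(Ins s1 \<union> Ins s2) \<inter> Ins s2 = Ins s2"
      "(Ins s2 \<union> Ins s3) \<inter> Ins s2 = Ins s2" "(Ins s2 \<union> Ins s3) \<inter> Ins s3 = Ins s3" by blast+
    show ?thesis
      using True r12 r23 assms by (auto simp: par_simps Un_assoc a fun_eq_iff)
  qed
  then show ?thesis unfolding par_def by (simp add: fun_eq_iff Un_assoc)
qed

lemma par_gamma:
  assumes c1: "causal_system s1" and c2: "causal_system s2" and d: "lam s1 \<inter> lam s2 = {}"
    and i: "i \<in> Ins s1" and o: "ou \<in> Outs s1"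
  shows "par (gamma s1 i ou) s2 = gamma (par s1 s2) i ou"
proof -
  have cp: "causal_system (par s1 s2)" using par_causal[OF c1 c2 d] .
  have ip: "i \<in> Ins (par s1 s2)" and op: "ou \<in> Outs (par s1 s2)" using i o by (auto simp: par_simps)
  have i2: "i \<notin> Ins s2" "i \<notin> Outs s2" "ou \<notin> Outs s2" "ou \<notin> Ins s2"
    using d i o unfolding lam_def by auto
  have I: "Ins s1 - {i} \<union> Ins s2 = Ins s1 \<union> Ins s2 - {i}" using i2 by blast
  have O: "Outs s1 - {ou} \<union> Outs s2 = Outs s1 \<union> Outs s2 - {ou}" using i2 by blast
  have "fn (par (gamma s1 i ou) s2) X = fn (gamma (par s1 s2) i ou) X" for X
  proof (cases "X \<in> Inputs (Ins s1 \<union> Ins s2 - {i})")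
    case False
    then show ?thesis by (simp add: par_simps gamma_simps I)
  next
    case True
    define Xr where "Xr = restrict X (Ins s1 - {i})"
    have Xr: "Xr \<in> Inputs (Ins s1 - {i})" unfolding Xr_def using True by (rule restr_in) blast
    define A where "A = fixval (par s1 s2) i ou X"
    have XP: "X \<in> Inputs (Ins (par s1 s2) - {i})" using True by (simp add: par_simps)
    have A: "A \<in> WO" "fn (par s1 s2) (X(i := A)) ou = A" using fixval[OF cp ip op XP] unfolding A_def by auto
    have XA: "X(i := A) \<in> Inputs (Ins s1 \<union> Ins s2)" using upd_in[OF True _ A(1)] i by blast
    have r1: "restrict (X(i := A)) (Ins s1) = Xr(i := A)" unfolding Xr_def using i by (auto simp: fun_eq_iff)
    have r2: "restrict (X(i := A)) (Ins s2) = restrict X (Ins s2)" using i2 by (auto simp: fun_eq_iff)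
    have fA: "fn s1 (Xr(i := A)) ou = A" using A(2) XA o by (simp add: par_simps r1)
    have fx: "fixval s1 i ou Xr = A" using fixval_eq[OF c1 i o Xr A(1) fA] .
    have L: "fn (par (gamma s1 i ou) s2) X = (\<lambda>l. if l \<in> Outs s1 - {ou} then restrict (fn s1 (Xr(i := A))) (Outs s1 - {ou}) l
        else if l \<in> Outs s2 then fn s2 (restrict X (Ins s2)) l else undefined)"
    proof -
      have "X \<in> Inputs (Ins (gamma s1 i ou) \<union> Ins s2)" using True I by (simp add: gamma_simps)
      moreover have G: "fn (gamma s1 i ou) Xr = restrict (fn s1 (Xr(i := A))) (Outs s1 - {ou})"
        using Xr fx by (simp add: gamma_simps)
      ultimately have P: "fn (par (gamma s1 i ou) s2) X = (\<lambda>l. if l \<in> Outs (gamma s1 i ou) then fn (gamma s1 i ou) (restrict X (Ins (gamma s1 i ou))) l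
        else if l \<in> Outs s2 then fn s2 (restrict X (Ins s2)) l else undefined)"
        by (simp only: par_simps if_True)
      have XrE: "restrict X (Ins (gamma s1 i ou)) = Xr" unfolding Xr_def by (simp add: gamma_simps)
      have OG: "Outs (gamma s1 i ou) = Outs s1 - {ou}" by (simp add: gamma_simps)
      show ?thesis unfolding P XrE G OG by (rule refl)
    qed
    have R: "fn (gamma (par s1 s2) i ou) X = restrict (\<lambda>l. if l \<in> Outs s1 then fn s1 (Xr(i := A)) l
        else if l \<in> Outs s2 then fn s2 (restrict X (Ins s2)) l else undefined) (Outs s1 \<union> Outs s2 - {ou})"
    proof -
      have "fn (gamma (par s1 s2) i ou) X = restrict (fn (par s1 s2) (X(i := A))) (Outs s1 \<union> Outs s2 - {ou})"
        using XP by (simp add: gamma_simps A_def par_simps)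
      also have "fn (par s1 s2) (X(i := A)) = (\<lambda>l. if l \<in> Outs s1 then fn s1 (Xr(i := A)) l
        else if l \<in> Outs s2 then fn s2 (restrict X (Ins s2)) l else undefined)"
        using XA unfolding par_simps r1 r2 by simp
      finally show ?thesis .
    qed
    show ?thesis unfolding L R using i2 by (auto simp: fun_eq_iff)
  qed
  then show ?thesis unfolding par_def gamma_def using I O by (simp add: fun_eq_iff)
qed

lemma coi: "composition_order_invariant (causal_systems :: ('l, 'p::order) sys set) lam Gam par conn"
  unfolding composition_order_invariant_def
proof (intro conjI ballI impI)
  fix s :: "('l, 'p) sys" and e e' assume s: "s \<in> causal_systems" and e: "e \<in> Gam s"
    and e': "e' \<in> Gam (conn s e)"
  have cs: "causal_system s" using s by (simp add: causal_systems_iff)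
  have dj: "Ins s \<inter> Outs s = {}" using cs_fin[OF cs] by blast
  obtain i ou where io: "e = {i, ou}" "i \<in> Ins s" "ou \<in> Outs s" using e unfolding Gam_iff by blast
  have ce: "conn s e = gamma s i ou" unfolding io(1) by (rule conn_eq[OF dj io(2,3)])
  obtain i' o' where io': "e' = {i', o'}" "i' \<in> Ins s - {i}" "o' \<in> Outs s - {ou}"
    using e' unfolding Gam_iff ce gamma_simps by blast
  have ce': "conn s e' = gamma s i' o'" unfolding io'(1) by (rule conn_eq[OF dj]) (use io' in auto)
  have dg: "Ins (gamma s i ou) \<inter> Outs (gamma s i ou) = {}" "Ins (gamma s i' o') \<inter> Outs (gamma s i' o') = {}"
    using dj by (auto simp: gamma_simps)
  show "e' \<in> Gam s" using io' unfolding Gam_iff by blast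
  show "e \<in> Gam (conn s e')" using io io' unfolding Gam_iff ce' gamma_simps by blast
  have l: "conn (conn s e) e' = gamma (gamma s i ou) i' o'"
    unfolding ce io'(1) by (rule conn_eq[OF dg(1)]) (use io' in \<open>auto simp: gamma_simps\<close>)
  have r: "conn (conn s e') e = gamma (gamma s i' o') i ou"
    unfolding ce' io(1) by (rule conn_eq[OF dg(2)]) (use io io' in \<open>auto simp: gamma_simps\<close>)
  show "conn (conn s e) e' = conn (conn s e') e"
    unfolding l r using io io' by (intro gamma_comm[OF cs]) auto
next
  fix s1 s2 s3 :: "('l, 'p) sys"
  assume "lam s1 \<inter> lam s2 = {} \<and> lam s1 \<inter> lam s3 = {} \<and> lam s2 \<inter> lam s3 = {}"
  then show "par (par s1 s2) s3 = par s1 (par s2 s3)"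
    by (intro par_assoc) (auto simp: lam_def)
next
  fix s1 s2 :: "('l, 'p) sys"
  assume "lam s1 \<inter> lam s2 = {}"
  then show "par s1 s2 = par s2 s1" by (intro par_comm) (auto simp: lam_def)
next
  fix s1 s2 :: "('l, 'p) sys" and e
  assume s1: "s1 \<in> causal_systems" and s2: "s2 \<in> causal_systems" and e: "e \<in> Gam s1"
    and d: "lam s1 \<inter> lam s2 = {}"
  have c1: "causal_system s1" and c2: "causal_system s2" using s1 s2 by (simp_all add: causal_systems_iff)
  have cp: "causal_system (par s1 s2)" using par_causal[OF c1 c2 d] .
  obtain i ou where io: "e = {i, ou}" "i \<in> Ins s1" "ou \<in> Outs s1" using e unfolding Gam_iff by blast
  have "conn s1 e = gamma s1 i ou" unfolding io(1)
    by (rule conn_eq[OF cs_fin[OF c1, THEN conjunct2, THEN conjunct2] io(2,3)])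
  moreover have "conn (par s1 s2) e = gamma (par s1 s2) i ou" unfolding io(1)
    by (rule conn_eq[OF cs_fin[OF cp, THEN conjunct2, THEN conjunct2]]) (use io in \<open>auto simp: par_simps\<close>)
  ultimately show "par (conn s1 e) s2 = conn (par s1 s2) e"
    using par_gamma[OF c1 c2 d io(2,3)] by simp
qed

theorem theorem6p6:
  shows "connection_well_defined (causal_systems :: ('l, 'p::order) sys set) \<and>
         functional_system_algebra (causal_systems :: ('l, 'p::order) sys set) lam Gam par conn \<and>
         composition_order_invariant (causal_systems :: ('l, 'p::order) sys set) lam Gam par conn"
  using cwd fsa coi by blast

end
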